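(* Let $G$ be a $4\times 4$ array with entries in $\{0,1,2,3\}$ in which each of the four values occurs exactly $4$ times, and in which every row and every column is a quad of values, i.e. is of type D (four different values), type H (two values, each occurring twice), or type S (one value occurring four times). If some column of $G$ is of type S, then every row of $G$ is of type D.
   Context: This describes the values of a single attribute in a semimagic quad square built from the 16 cards of the EvenQuads-16 deck (the 16 cards sharing one fixed value of a third attribute), where each value of the attribute appears exactly four times. *)

theory Defs
  imports Main "HOL-Library.Multiset"
begin

definition row :: "(nat \<Rightarrow> nat \<Rightarrow> nat) \<Rightarrow> nat \<Rightarrow> nat list" where
  "row G i = [G i 0, G i 1, G i 2, G i 3]"

definition col :: "(nat \<Rightarrow> nat \<Rightarrow> nat) \<Rightarrow> nat \<Rightarrow> nat list" where
  "col G j = [G 0 j, G 1 j, G 2 j, G 3 j]"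

definition typeD :: "nat list \<Rightarrow> bool" where
  "typeD xs \<longleftrightarrow> length xs = 4 \<and> distinct xs"

definition typeH :: "nat list \<Rightarrow> bool" where
  "typeH xs \<longleftrightarrow> (\<exists>a b. a \<noteq> b \<and> mset xs = {#a, a, b, b#})"

definition typeS :: "nat list \<Rightarrow> bool" where
  "typeS xs \<longleftrightarrow> (\<exists>a. xs = replicate 4 a)"

definition is_quad :: "nat list \<Rightarrow> bool" where
  "is_quad xs \<longleftrightarrow> typeD xs \<or> typeH xs \<or> typeS xs"

end

theory Submission
  imports Defs
begin

theorem mainTheorem2:
  fixes G :: "nat \<Rightarrow> nat \<Rightarrow> nat"
  assumes vals: "\<And>i j. i < 4 \<Longrightarrow> j < 4 \<Longrightarrow> G i j \<in> {0, 1, 2, 3}"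
    and counts: "\<And>v. v \<in> {0, 1, 2, 3} \<Longrightarrow>
                   card {(i, j). i < 4 \<and> j < 4 \<and> G i j = v} = 4"
    and rows: "\<And>i. i < 4 \<Longrightarrow> is_quad (row G i)"
    and cols: "\<And>j. j < 4 \<Longrightarrow> is_quad (col G j)"
    and scol: "\<exists>j < 4. typeS (col G j)"
  shows "\<forall>i < 4. typeD (row G i)"
proof (intro allI impI)
  fix i :: nat assume i: "i < 4"
  obtain j a where j: "j < 4" and ca: "col G j = replicate 4 a"
    using scol unfolding typeS_def by blast
  have colv: "\<And>r. r < 4 \<Longrightarrow> G r j = a"
  proof -
    fix r :: nat assume "r < 4"
    then have "r = 0 \<or> r = 1 \<or> r = 2 \<or> r = 3" by auto
    then show "G r j = a" using ca by (auto simp: col_def numeral_eq_Suc)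
  qed
  have av: "a \<in> {0,1,2,3}" using vals[OF _ j, of 0] colv[of 0] by simp
  define C where "C = (\<lambda>r. (r, j)) ` {..<4::nat}"
  define S where "S = {(i, j'). i < 4 \<and> j' < 4 \<and> G i j' = a}"
  have cC: "card C = 4" unfolding C_def by (subst card_image) (auto simp: inj_on_def)
  have CS: "C \<subseteq> S" unfolding C_def S_def using colv j by auto
  have fS: "finite S" unfolding S_def
    by (rule finite_subset[of _ "{..<4} \<times> {..<4}"]) auto
  have "C = S" using card_subset_eq[OF fS CS] cC counts[OF av] S_def by simp
  then have uniq: "\<And>k. k < 4 \<Longrightarrow> G i k = a \<Longrightarrow> k = j"
    using i unfolding C_def S_def by auto
  have gij: "G i j = a" using colv i .
  have cnt: "count (mset (row G i)) a = 1"
  proof -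
    have "j = 0 \<or> j = 1 \<or> j = 2 \<or> j = 3" using j by auto
    then show ?thesis using uniq[of 0] uniq[of 1] uniq[of 2] uniq[of 3] gij
      by (auto simp: row_def)
  qed
  have "is_quad (row G i)" using rows i .
  moreover have "\<not> typeH (row G i)"
  proof
    assume "typeH (row G i)"
    then obtain x y where "mset (row G i) = {#x, x, y, y#}" unfolding typeH_def by blast
    then show False using cnt by (auto split: if_splits)
  qed
  moreover have "\<not> typeS (row G i)"
  proof
    assume "typeS (row G i)"
    then obtain b where "row G i = replicate 4 b" unfolding typeS_def by blast
    then have "G i 0 = b" "G i 1 = b" "G i 2 = b" "G i 3 = b"
      by (auto simp: row_def numeral_eq_Suc)
    moreover have "j = 0 \<or> j = 1 \<or> j = 2 \<or> j = 3" using j by auto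
    ultimately show False using uniq[of 0] uniq[of 1] gij by auto
  qed
  ultimately show "typeD (row G i)" unfolding is_quad_def by blast
qed

end
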